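(* Let $n\ge 1$ and let $F_n(z)$ denote the $n$-th truncation of the continued fraction $\dfrac{1}{2z+\dfrac{1}{2z+\dfrac{1}{\ddots}}}$, i.e. $F_1(z)=\dfrac{1}{2z}$ and $F_{m+1}(z)=\dfrac{1}{2z+F_m(z)}$. Let $\theta_j=\dfrac{j\pi}{n+1}$. Then $$F_n(z)=\sum_{j=1}^n\frac{\sin^2\theta_j}{(n+1)\,(z-i\cos\theta_j)}.$$ *)

theory Defs
  imports Complex_Main
begin

text \<open>Truncations of the continued fraction 1/(2z + 1/(2z + ...)).
  cf 0 z = 0 is an auxiliary starting value, so that cf 1 z = 1/(2z) and
  cf (m+1) z = 1/(2z + cf m z).\<close>
fun cf :: "nat \<Rightarrow> complex \<Rightarrow> complex" where
  "cf 0 z = 0"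
| "cf (Suc m) z = 1 / (2 * z + cf m z)"

end

theory Submission
  imports Defs
begin

lemma tele:
  fixes a :: real
  shows "2 * sin (a/2) * (\<Sum>j=1..n. cos (real j * a)) = sin ((real n + 1/2) * a) - sin (a/2)"
proof (induction n)
  case 0
  then show ?case by simp
next
  case (Suc n)
  have e1: "(real (Suc n) + 1/2) * a = real (Suc n) * a + a/2" by (simp add: algebra_simps)
  have e2: "(real n + 1/2) * a = real (Suc n) * a - a/2" by (simp add: algebra_simps)
  have "sin ((real (Suc n) + 1/2) * a) - sin ((real n + 1/2) * a) = 2 * sin (a/2) * cos (real (Suc n) * a)"
    unfolding e1 e2 sin_add sin_diff by simp
  then show ?case using Suc by (simp add: distrib_left)
qed

lemma cos_sum:
  fixes n m :: nat
  assumes "0 < m" "m < 2 * (n+1)"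
  shows "(\<Sum>j=1..n. cos (real j * (real m * pi / real (n+1)))) = - (1 + (-1)^m) / 2"
proof -
  define a where "a = real m * pi / real (n+1)"
  have "0 < a/2" using assms by (simp add: a_def)
  moreover have "a/2 < pi"
  proof -
    have "real m < 2 * real (n+1)" using assms(2) by linarith
    hence "real m * pi < 2 * real (n+1) * pi" by simp
    thus ?thesis by (simp add: a_def field_simps)
  qed
  ultimately have s: "sin (a/2) > 0" by (rule sin_gt_zero)
  have "(real n + 1/2) * a = real m * pi - a/2" by (simp add: a_def field_simps)
  hence "sin ((real n + 1/2) * a) = - ((-1)^m) * sin (a/2)" by (simp add: sin_diff)
  hence "2 * sin (a/2) * (\<Sum>j=1..n. cos (real j * a)) = sin (a/2) * (- (1 + (-1)^m))"
    using tele[of a n] by (simp add: algebra_simps)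
  hence "sin (a/2) * (2 * (\<Sum>j=1..n. cos (real j * a)) + 1 + (-1)^m) = 0"
    by (simp add: algebra_simps)
  hence "2 * (\<Sum>j=1..n. cos (real j * a)) + 1 + (-1)^m = 0" using s by simp
  hence "(\<Sum>j=1..n. cos (real j * a)) = - (1 + (-1)^m) / 2" by (simp add: field_simps)
  thus ?thesis by (simp add: a_def)
qed

lemma prod_sum:
  fixes x :: real assumes "k \<ge> 1"
  shows "sin x * sin (real k * x) = (cos (real (k-1) * x) - cos (real (k+1) * x)) / 2"
proof -
  have a: "real (k-1) * x = real k * x - x" using assms by (simp add: algebra_simps of_nat_diff)
  have b: "real (k+1) * x = real k * x + x" by (simp add: algebra_simps)
  show ?thesis unfolding a b cos_diff cos_add by simp
qed

lemma ortho:
  fixes n k :: nat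
  assumes "1 \<le> k" "k \<le> n"
  shows "(\<Sum>j=1..n. sin (real j * pi / real (n+1)) * sin (real k * (real j * pi / real (n+1))))
         = (if k = 1 then real (n+1) / 2 else 0)"
proof -
  have r: "\<And>j q. real q * (real j * pi / real (n+1)) = real j * (real q * pi / real (n+1))" by simp
  have "(\<Sum>j=1..n. sin (real j * pi / real (n+1)) * sin (real k * (real j * pi / real (n+1))))
     = (\<Sum>j=1..n. (cos (real j * (real (k-1) * pi / real (n+1))) - cos (real j * (real (k+1) * pi / real (n+1)))) / 2)"
  proof (rule sum.cong[OF refl])
    fix j assume "j \<in> {1..n}"
    define x where "x = real j * pi / real (n+1)"
    have "sin x * sin (real k * x) = (cos (real (k-1) * x) - cos (real (k+1) * x)) / 2"
      by (rule prod_sum[OF assms(1)])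
    moreover have "real (k-1) * x = real j * (real (k-1) * pi / real (n+1))"
      "real (k+1) * x = real j * (real (k+1) * pi / real (n+1))" by (simp_all add: x_def)
    ultimately show "sin (real j * pi / real (n+1)) * sin (real k * (real j * pi / real (n+1)))
     = (cos (real j * (real (k-1) * pi / real (n+1))) - cos (real j * (real (k+1) * pi / real (n+1)))) / 2"
      by (simp only: x_def)
  qed
  also have "\<dots> = ((\<Sum>j=1..n. cos (real j * (real (k-1) * pi / real (n+1)))) - (\<Sum>j=1..n. cos (real j * (real (k+1) * pi / real (n+1))))) / 2"
    by (simp only: sum_divide_distrib[symmetric] sum_subtractf)
  also have "\<dots> = (if k = 1 then real (n+1) / 2 else 0)"
  proof (cases "k = 1")
    case True
    have "(\<Sum>j=1..n. cos (real j * (real (k+1) * pi / real (n+1)))) = - (1 + (-1)^(k+1)) / 2"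
      by (rule cos_sum) (use assms in auto)
    then show ?thesis using True by simp
  next
    case False
    have c1: "(\<Sum>j=1..n. cos (real j * (real (k+1) * pi / real (n+1)))) = - (1 + (-1)^(k+1)) / 2"
      by (rule cos_sum) (use assms in auto)
    have c2: "(\<Sum>j=1..n. cos (real j * (real (k-1) * pi / real (n+1)))) = - (1 + (-1)^(k-1)) / 2"
      by (rule cos_sum) (use assms False in auto)
    have "(-1::real)^(k+1) = (-1)^(k-1)"
    proof -
      obtain q where "k = Suc q" using assms by (cases k) auto
      thus ?thesis by simp
    qed
    then show ?thesis using c1 c2 False by simp
  qed
  finally show ?thesis .
qed

lemma down:
  fixes y :: "nat \<Rightarrow> complex"
  assumes n: "n \<ge> 1" and nz: "\<forall>m<n. 2 * z + cf m z \<noteq> 0"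
    and rec: "\<forall>m<n. y m = 2 * z * y (Suc m) + y (Suc (Suc m))"
    and fin: "y (Suc n) = 0"
  shows "y 1 = cf n z * y 0"
proof -
  have aux: "d < n \<longrightarrow> y (n - d) = cf (Suc d) z * y (n - Suc d)" for d
  proof (induction d)
    case 0
    have "y (n-1) = 2 * z * y (Suc (n-1)) + y (Suc (Suc (n-1)))" using rec n by simp
    hence "y (n-1) = 2 * z * y n" using n fin by simp
    moreover have "2 * z \<noteq> 0" using nz n by auto
    ultimately show ?case by (simp add: field_simps)
  next
    case (Suc d)
    show ?case
    proof
      assume sd: "Suc d < n"
      have "y (n - Suc (Suc d)) = 2 * z * y (Suc (n - Suc (Suc d))) + y (Suc (Suc (n - Suc (Suc d))))"
        using rec sd by simp
      moreover have "Suc (n - Suc (Suc d)) = n - Suc d" "Suc (Suc (n - Suc (Suc d))) = n - d" using sd by auto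
      ultimately have "y (n - Suc (Suc d)) = (2 * z + cf (Suc d) z) * y (n - Suc d)"
        using Suc sd by (simp add: algebra_simps)
      moreover have "2 * z + cf (Suc d) z \<noteq> 0" using nz sd by auto
      ultimately show "y (n - Suc d) = cf (Suc (Suc d)) z * y (n - Suc (Suc d))"
        by (simp add: field_simps)
    qed
  qed
  have "y (n - (n-1)) = cf (Suc (n-1)) z * y (n - Suc (n-1))" using aux[of "n-1"] n by simp
  thus ?thesis using n by simp
qed

lemma e_rec:
  fixes t :: real
  shows "(-\<i>)^k * complex_of_real (sin (real k * t)) - (-\<i>)^(k+2) * complex_of_real (sin (real (k+2) * t))
    = 2 * \<i> * complex_of_real (cos t) * ((-\<i>)^(k+1) * complex_of_real (sin (real (k+1) * t)))"
proof -
  have a: "real k * t = real (k+1) * t - t" by (simp add: algebra_simps)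
  have b: "real (k+2) * t = real (k+1) * t + t" by (simp add: algebra_simps)
  have r: "sin (real k * t) + sin (real (k+2) * t) = 2 * cos t * sin (real (k+1) * t)"
    unfolding a b sin_diff sin_add by simp
  have "(-\<i>)^k * complex_of_real (sin (real k * t)) - (-\<i>)^(k+2) * complex_of_real (sin (real (k+2) * t))
      = (-\<i>)^k * complex_of_real (sin (real k * t) + sin (real (k+2) * t))"
    by (simp add: power_add algebra_simps)
  also have "\<dots> = (-\<i>)^k * complex_of_real (2 * cos t * sin (real (k+1) * t))" using r by simp
  also have "\<dots> = 2 * \<i> * complex_of_real (cos t) * ((-\<i>)^(k+1) * complex_of_real (sin (real (k+1) * t)))"
    by (simp add: power_add algebra_simps)
  finally show ?thesis .
qed

theorem lemma2:
  fixes n :: nat and z :: complex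
  assumes "n \<ge> 1"
    and "\<forall>m<n. 2 * z + cf m z \<noteq> 0"
  shows "cf n z = (\<Sum>j=1..n.
            complex_of_real ((sin (real j * pi / real (n + 1)))\<^sup>2)
            / (of_nat (n + 1) * (z - \<i> * complex_of_real (cos (real j * pi / real (n + 1))))))"
proof -
  define th where "th j = real j * pi / real (n+1)" for j
  define e where "e j k = (-\<i>)^k * complex_of_real (sin (real k * th j))" for j k
  have erec: "e j m - e j (Suc (Suc m)) = 2 * \<i> * complex_of_real (cos (th j)) * e j (Suc m)" for j m
    using e_rec[of m "th j"] unfolding e_def by simp
  have sinpos: "sin (th j) > 0" if "j \<in> {1..n}" for j
  proof (rule sin_gt_zero)
    show "0 < th j" using that by (simp add: th_def)
    have "real j < real (n+1)" using that by simp
    hence "real j * pi < real (n+1) * pi" by simp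
    thus "th j < pi" by (simp add: th_def field_simps)
  qed
  have nopole: "z - \<i> * complex_of_real (cos (th j)) \<noteq> 0" if j: "j \<in> {1..n}" for j
  proof
    assume h: "z - \<i> * complex_of_real (cos (th j)) = 0"
    define w where "w k = e j k" for k
    have "\<forall>m<n. w m = 2 * z * w (Suc m) + w (Suc (Suc m))"
    proof (intro allI impI)
      fix m
      have "z = \<i> * complex_of_real (cos (th j))" using h by simp
      thus "w m = 2 * z * w (Suc m) + w (Suc (Suc m))" using erec[of j m]
        unfolding w_def by (simp add: algebra_simps)
    qed
    moreover have "w (Suc n) = 0"
    proof -
      have "real (Suc n) * th j = real j * pi" by (simp add: th_def)
      thus ?thesis by (simp add: w_def e_def)
    qed
    ultimately have "w 1 = cf n z * w 0" using down[OF assms] by blast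
    hence "w 1 = 0" by (simp add: w_def e_def)
    hence "sin (th j) = 0" by (simp add: w_def e_def)
    thus False using sinpos[OF j] by simp
  qed
  define g where "g j = \<i> * complex_of_real (sin (th j)) / (of_nat (n+1) * (z - \<i> * complex_of_real (cos (th j))))" for j
  define y where "y k = (if k = 0 then 1 else 0) + (\<Sum>j=1..n. g j * e j k)" for k
  have gc: "g j * (z - \<i> * complex_of_real (cos (th j))) = \<i> * complex_of_real (sin (th j)) / of_nat (n+1)"
    if "j \<in> {1..n}" for j
  proof -
    have "g j = (\<i> * complex_of_real (sin (th j)) / of_nat (n+1)) / (z - \<i> * complex_of_real (cos (th j)))"
      by (simp add: g_def divide_divide_eq_left mult.commute)
    thus ?thesis using nopole[OF that] by simp
  qed
  have yrec: "\<forall>m<n. y m = 2 * z * y (Suc m) + y (Suc (Suc m))"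
  proof (intro allI impI)
    fix m assume m: "m < n"
    have nn: "2 + complex_of_nat n * 2 \<noteq> 0"
    proof -
      have "2 + complex_of_nat n * 2 = of_nat (2 + n * 2)" by simp
      also have "\<dots> \<noteq> 0" by (simp only: of_nat_eq_0_iff)
      finally show ?thesis .
    qed
    have "y m - 2 * z * y (Suc m) - y (Suc (Suc m))
       = (if m = 0 then 1 else 0) + (\<Sum>j=1..n. g j * (e j m - e j (Suc (Suc m)) - 2 * z * e j (Suc m)))"
      by (simp add: y_def sum_subtractf sum_distrib_left sum.distrib algebra_simps)
    also have "(\<Sum>j=1..n. g j * (e j m - e j (Suc (Suc m)) - 2 * z * e j (Suc m)))
       = (\<Sum>j=1..n. -2 * (-\<i>)^(Suc m) * (\<i> / of_nat (n+1)) * complex_of_real (sin (th j) * sin (real (Suc m) * th j)))"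
    proof (rule sum.cong[OF refl])
      fix j assume j: "j \<in> {1..n}"
      have "g j * (e j m - e j (Suc (Suc m)) - 2 * z * e j (Suc m))
          = -2 * (g j * (z - \<i> * complex_of_real (cos (th j)))) * e j (Suc m)"
        using erec[of j m] by (simp add: algebra_simps)
      also have "\<dots> = -2 * (\<i> * complex_of_real (sin (th j)) / of_nat (n+1)) * e j (Suc m)"
        using gc[OF j] by simp
      finally show "g j * (e j m - e j (Suc (Suc m)) - 2 * z * e j (Suc m))
          = -2 * (-\<i>)^(Suc m) * (\<i> / of_nat (n+1)) * complex_of_real (sin (th j) * sin (real (Suc m) * th j))"
        by (simp add: e_def algebra_simps)
    qed
    also have "\<dots> = -2 * (-\<i>)^(Suc m) * (\<i> / of_nat (n+1)) * complex_of_real (\<Sum>j=1..n. sin (th j) * sin (real (Suc m) * th j))"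
      by (simp add: sum_distrib_left)
    also have "(\<Sum>j=1..n. sin (th j) * sin (real (Suc m) * th j)) = (if Suc m = 1 then real (n+1) / 2 else 0)"
      unfolding th_def by (rule ortho) (use m in auto)
    finally have "y m - 2 * z * y (Suc m) - y (Suc (Suc m)) = 0" using nn
      by (cases "m = 0") (simp_all add: field_simps)
    thus "y m = 2 * z * y (Suc m) + y (Suc (Suc m))" by (simp add: algebra_simps)
  qed
  have yfin: "y (Suc n) = 0"
  proof -
    have "e j (Suc n) = 0" for j
    proof -
      have "real (Suc n) * th j = real j * pi" by (simp add: th_def)
      thus ?thesis by (simp add: e_def)
    qed
    thus ?thesis by (simp add: y_def)
  qed
  have "y 1 = cf n z * y 0" by (rule down[OF assms yrec yfin])
  hence "cf n z = y 1" by (simp add: y_def e_def)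
  also have "\<dots> = (\<Sum>j=1..n. g j * e j 1)" by (simp add: y_def)
  also have "\<dots> = (\<Sum>j=1..n.
            complex_of_real ((sin (real j * pi / real (n + 1)))\<^sup>2)
            / (of_nat (n + 1) * (z - \<i> * complex_of_real (cos (real j * pi / real (n + 1))))))"
  proof (rule sum.cong[OF refl])
    fix j assume j: "j \<in> {1..n}"
    show "g j * e j 1 = complex_of_real ((sin (real j * pi / real (n + 1)))\<^sup>2)
            / (of_nat (n + 1) * (z - \<i> * complex_of_real (cos (real j * pi / real (n + 1)))))"
    proof -
      have ii: "\<And>a b::complex. - (\<i> * a * (\<i> * a) / b) = a * a / b"
        by (simp add: algebra_simps)
      show ?thesis by (simp add: g_def e_def th_def power2_eq_square ii)
    qed
  qed
  finally show ?thesis .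
qed

end
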